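(* For any CQAP $Q$ whose fracture $Q_\dagger$ is hierarchical, with static width $\mathsf w=\mathsf w(Q)$ and dynamic width $\delta=\delta(Q)$, either $\delta=\mathsf w$ or $\delta=\mathsf w-1$.
   Context: CQAP. A conjunctive query with free access patterns (CQAP) has the form $Q(\mathcal O\mid\mathcal I)=R_1(\mathcal X_1),\dots,R_n(\mathcal X_n)$, where $R_i(\mathcal X_i)$ are atoms, $\mathit{vars}(Q)=\bigcup_i\mathcal X_i$, and the free variables $\mathcal O\cup\mathcal I\subseteq\mathit{vars}(Q)$ are partitioned into input variables $\mathcal I$ and output variables $\mathcal O$ (either may be empty); the other variables are bound. $\mathit{atoms}(X)$ denotes the set of atoms whose schema contains $X$. A CQAP is hierarchical if for all variables $A,B$: $\mathit{atoms}(A)\subseteq\mathit{atoms}(B)$, or $\mathit{atoms}(B)\subseteq\mathit{atoms}(A)$, or $\mathit{atoms}(A)\cap\mathit{atoms}(B)=\emptyset$. Fracture. The fracture $Q_\dagger$ of $Q$ is obtained by: replacing every occurrence of an input variable in every atom by a distinct fresh variable; computing the connected components of the hypergraph of the resulting query (vertices = variables, hyperedges = atom schemas); within each connected component, replacing all fresh variables originating from the same input variable of $Q$ by one fresh input variable. Output and bound variables are unchanged. Variable orders. A variable order (VO) $\omega$ for a CQAP is a rooted forest with exactly one node per variable such that the variables of each atom lie on a common root-to-leaf path; $\mathit{dep}_\omega(X)$ is the set of ancestors $Y$ of $X$ that occur in a common atom with some variable of the subtree rooted at $X$. The extended VO adds leaves: each atom becomes a child of its lowest variable; then, processing variables bottom-up,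 at each variable $X$ with $\mathcal S=\{X\}\cup\mathit{dep}_\omega(X)$ and $\mathcal R$ the set of atoms below $X$, consider candidate indicator atoms $I_{\mathcal Z}R(\mathcal Z)$ for atoms $R(\mathcal Y)$ not in $\mathcal R$ with $\mathcal Z=\mathcal Y\cap\mathcal S\neq\emptyset$; run the GYO reduction (repeatedly delete a vertex occurring in only one hyperedge and a hyperedge contained in another) on the hypergraph whose hyperedges are the schemas of the candidates and of $\mathcal R$, and add as children of $X$ those candidates whose hyperedges survive in the fixpoint. All VOs are extended. A VO is access-top if no bound variable is an ancestor of a free variable and no output variable is an ancestor of an input variable. Widths. For a VO $\omega$ and variable $X$, $\omega_X$ is the subtree rooted at $X$ and $Q_X$ the join of all atoms and indicator atoms at the leaves of $\omega_X$. For a variable set $\mathcal F$, $\rho^*_{Q_X}(\mathcal F)$ is the minimum of $\sum_e\lambda_e$ over $\lambda_e\in[0,1]$ indexed by atoms $e$ of $Q_X$ subject to $\sum_{e\ni Y}\lambda_e\ge1$ for all $Y\in\mathcal F$ (so $\rho^*(\emptyset)=0$). $\mathsf w(\omega)=\max_X\rho^*_{Q_X}(\{X\}\cup\mathit{dep}_\omega(X))$ and $\delta(\omega)=\max_X\max_{R(\mathcal Y)}\rho^*_{Q_X}((\{X\}\cup\mathit{dep}_\omega(X))\setminus\mathcal Y)$, the inner maximum over atoms and indicator atoms $R(\mathcal Y)$ at leaves of $\omega_X$. For a CQAP $Q$, $(\delta(Q),\mathsf w(Q))$ is the lexicographically smallest pair $(\delta(\omega),\mathsf w(\omega))$ (first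 minimise $\delta$, then $\mathsf w$) over all access-top VOs $\omega$ of $Q_\dagger$. *)

theory Defs
  imports Complex_Main
begin

(* An atom R(x1,...,xk) is a relation symbol together with its list of variables.
   A query body is a list of atoms; atoms are identified by their position. *)
type_synonym ('r,'a) cq_atom = "'r \<times> 'a list"

definition schema :: "('r,'a) cq_atom list \<Rightarrow> nat \<Rightarrow> 'a set" where
  "schema Q j = set (snd (Q ! j))"

definition qvars :: "('r,'a) cq_atom list \<Rightarrow> 'a set" where
  "qvars Q = (\<Union>j<length Q. schema Q j)"

definition atoms_of :: "('r,'a) cq_atom list \<Rightarrow> 'a \<Rightarrow> nat set" where
  "atoms_of Q A = {j. j < length Q \<and> A \<in> schema Q j}"

definition hierarchical :: "('r,'a) cq_atom list \<Rightarrow> bool" where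
  "hierarchical Q \<longleftrightarrow> (\<forall>A B. atoms_of Q A \<subseteq> atoms_of Q B \<or> atoms_of Q B \<subseteq> atoms_of Q A
                           \<or> atoms_of Q A \<inter> atoms_of Q B = {})"

definition cqap :: "('r,'v) cq_atom list \<Rightarrow> 'v set \<Rightarrow> 'v set \<Rightarrow> bool" where
  "cqap Q Out Inp \<longleftrightarrow> Out \<inter> Inp = {} \<and> Out \<union> Inp \<subseteq> qvars Q"

(* after replacing every input-variable occurrence by a fresh variable, two atoms
   share a variable iff they share a non-input variable *)
definition frac_adj :: "('r,'v) cq_atom list \<Rightarrow> 'v set \<Rightarrow> (nat \<times> nat) set" where
  "frac_adj Q Inp = {(i,j). i < length Q \<and> j < length Q \<and> (schema Q i \<inter> schema Q j) - Inp \<noteq> {}}"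

definition frac_comp :: "('r,'v) cq_atom list \<Rightarrow> 'v set \<Rightarrow> nat \<Rightarrow> nat set" where
  "frac_comp Q Inp i = {j. (i,j) \<in> (frac_adj Q Inp)\<^sup>*}"

(* variables of the fracture: (X,{}) for non-input X; (A,C) is the fresh input variable
   obtained from input variable A within component C *)
definition frac_var :: "('r,'v) cq_atom list \<Rightarrow> 'v set \<Rightarrow> nat \<Rightarrow> 'v \<Rightarrow> 'v \<times> nat set" where
  "frac_var Q Inp i X = (if X \<in> Inp then (X, frac_comp Q Inp i) else (X, {}))"

definition fracture :: "('r,'v) cq_atom list \<Rightarrow> 'v set \<Rightarrow> ('r, 'v \<times> nat set) cq_atom list" where
  "fracture Q Inp = map (\<lambda>i. (fst (Q ! i), map (frac_var Q Inp i) (snd (Q ! i)))) [0..<length Q]"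

definition frac_inputs :: "('r,'v) cq_atom list \<Rightarrow> 'v set \<Rightarrow> ('v \<times> nat set) set" where
  "frac_inputs Q Inp = {p \<in> qvars (fracture Q Inp). fst p \<in> Inp}"

definition frac_outputs :: "('r,'v) cq_atom list \<Rightarrow> 'v set \<Rightarrow> 'v set \<Rightarrow> ('v \<times> nat set) set" where
  "frac_outputs Q Out Inp = {p \<in> qvars (fracture Q Inp). fst p \<in> Out}"

(* A VO is given by its strict ancestor relation: (Y,X) \<in> anc means Y is a proper
   ancestor of X.  A finite strict order in which the ancestors of every node form a chain
   is exactly a rooted forest. *)
definition is_vo :: "('r,'a) cq_atom list \<Rightarrow> ('a \<times> 'a) set \<Rightarrow> bool" where
  "is_vo Q anc \<longleftrightarrow> anc \<subseteq> qvars Q \<times> qvars Q \<and> trans anc \<and> (\<forall>x. (x,x) \<notin> anc) \<and>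
     (\<forall>x y z. (y,x) \<in> anc \<longrightarrow> (z,x) \<in> anc \<longrightarrow> y = z \<or> (y,z) \<in> anc \<or> (z,y) \<in> anc) \<and>
     (\<forall>j<length Q. \<forall>x\<in>schema Q j. \<forall>y\<in>schema Q j. x = y \<or> (x,y) \<in> anc \<or> (y,x) \<in> anc)"

definition subtree :: "('a \<times> 'a) set \<Rightarrow> 'a \<Rightarrow> 'a set" where
  "subtree anc X = insert X {Y. (X,Y) \<in> anc}"

definition dep :: "('r,'a) cq_atom list \<Rightarrow> ('a \<times> 'a) set \<Rightarrow> 'a \<Rightarrow> 'a set" where
  "dep Q anc X = {Y. (Y,X) \<in> anc \<and>
      (\<exists>j<length Q. Y \<in> schema Q j \<and> schema Q j \<inter> subtree anc X \<noteq> {})}"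

definition dep_set :: "('r,'a) cq_atom list \<Rightarrow> ('a \<times> 'a) set \<Rightarrow> 'a \<Rightarrow> 'a set" where
  "dep_set Q anc X = insert X (dep Q anc X)"

(* original atoms that are leaves of the subtree rooted at X (an atom hangs below its
   lowest variable) *)
definition below :: "('r,'a) cq_atom list \<Rightarrow> ('a \<times> 'a) set \<Rightarrow> 'a \<Rightarrow> nat set" where
  "below Q anc X = {j. j < length Q \<and> schema Q j \<inter> subtree anc X \<noteq> {}}"

(* leaves of the extended VO: Inl j = original atom j; Inr (X,i,Z) = indicator atom
   I_Z R_i(Z) added as a child of variable X *)
type_synonym 'a leaf = "nat + ('a \<times> nat \<times> 'a set)"

definition leaf_schema :: "('r,'a) cq_atom list \<Rightarrow> 'a leaf \<Rightarrow> 'a set" where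
  "leaf_schema Q l = (case l of Inl j \<Rightarrow> schema Q j | Inr (X,i,Z) \<Rightarrow> Z)"

definition gyo_step :: "('l set \<times> ('l \<Rightarrow> 'a set)) \<Rightarrow> ('l set \<times> ('l \<Rightarrow> 'a set)) \<Rightarrow> bool" where
  "gyo_step s s' \<longleftrightarrow>
     (\<exists>v. card {l \<in> fst s. v \<in> snd s l} = 1 \<and> s' = (fst s, \<lambda>l. snd s l - {v})) \<or>
     (\<exists>l\<in>fst s. \<exists>l'\<in>fst s. l \<noteq> l' \<and> snd s l \<subseteq> snd s l' \<and> s' = (fst s - {l}, snd s))"

definition gyo_final :: "('l set \<times> ('l \<Rightarrow> 'a set)) \<Rightarrow> bool" where
  "gyo_final s \<longleftrightarrow> \<not> (\<exists>s'. gyo_step s s')"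

definition gyo_surv :: "'l set \<Rightarrow> ('l \<Rightarrow> 'a set) \<Rightarrow> 'l set" where
  "gyo_surv L E = {l. \<exists>s. gyo_step\<^sup>*\<^sup>* (L,E) s \<and> gyo_final s \<and> l \<in> fst s}"

definition ind_step :: "('r,'a) cq_atom list \<Rightarrow> ('a \<times> 'a) set
     \<Rightarrow> ('a \<Rightarrow> ('a \<times> nat \<times> 'a set) set) \<Rightarrow> 'a \<Rightarrow> ('a \<times> nat \<times> 'a set) set" where
  "ind_step Q anc f X =
    (let S = dep_set Q anc X;
         R = Inl ` below Q anc X \<union> Inr ` (\<Union>Y\<in>{Y. (X,Y) \<in> anc}. f Y);
         C = {(X, i, schema Q i \<inter> S) | i. i < length Q \<and> i \<notin> below Q anc X \<and> schema Q i \<inter> S \<noteq> {}}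
     in {c \<in> C. Inr c \<in> gyo_surv (Inr ` C \<union> R) (leaf_schema Q)})"

(* indicator atoms added as children of X, computed bottom-up *)
definition indicators :: "('r,'a) cq_atom list \<Rightarrow> ('a \<times> 'a) set \<Rightarrow> 'a \<Rightarrow> ('a \<times> nat \<times> 'a set) set" where
  "indicators Q anc = wfrec (anc\<inverse>) (ind_step Q anc)"

(* atoms and indicator atoms at the leaves of the subtree omega_X, i.e. the atoms of Q_X *)
definition QX :: "('r,'a) cq_atom list \<Rightarrow> ('a \<times> 'a) set \<Rightarrow> 'a \<Rightarrow> 'a leaf set" where
  "QX Q anc X = Inl ` below Q anc X \<union> Inr ` (\<Union>Y\<in>subtree anc X. indicators Q anc Y)"

definition rho_star :: "('l \<Rightarrow> 'a set) \<Rightarrow> 'l set \<Rightarrow> 'a set \<Rightarrow> real" where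
  "rho_star E L F = Inf {(\<Sum>e\<in>L. lam e) | lam.
      (\<forall>e\<in>L. 0 \<le> lam e \<and> lam e \<le> 1) \<and> (\<forall>Y\<in>F. (\<Sum>e\<in>{e\<in>L. Y \<in> E e}. lam e) \<ge> 1)}"

definition w_vo :: "('r,'a) cq_atom list \<Rightarrow> ('a \<times> 'a) set \<Rightarrow> real" where
  "w_vo Q anc = Max ((\<lambda>X. rho_star (leaf_schema Q) (QX Q anc X) (dep_set Q anc X)) ` qvars Q)"

definition delta_vo :: "('r,'a) cq_atom list \<Rightarrow> ('a \<times> 'a) set \<Rightarrow> real" where
  "delta_vo Q anc = Max ((\<lambda>X. Max ((\<lambda>e. rho_star (leaf_schema Q) (QX Q anc X)
                                   (dep_set Q anc X - leaf_schema Q e)) ` QX Q anc X)) ` qvars Q)"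

definition access_top :: "'a set \<Rightarrow> 'a set \<Rightarrow> ('a \<times> 'a) set \<Rightarrow> bool" where
  "access_top Out Inp anc \<longleftrightarrow>
     (\<forall>(Y,X)\<in>anc. (X \<in> Out \<union> Inp \<longrightarrow> Y \<in> Out \<union> Inp) \<and> (X \<in> Inp \<longrightarrow> Y \<notin> Out))"

definition access_top_vos :: "('r,'v) cq_atom list \<Rightarrow> 'v set \<Rightarrow> 'v set \<Rightarrow> (('v \<times> nat set) \<times> ('v \<times> nat set)) set set" where
  "access_top_vos Q Out Inp = {anc. is_vo (fracture Q Inp) anc \<and>
       access_top (frac_outputs Q Out Inp) (frac_inputs Q Inp) anc}"

(* (delta(Q), w(Q)): lexicographically smallest (delta, w) over access-top VOs of the fracture *)
definition delta_Q :: "('r,'v) cq_atom list \<Rightarrow> 'v set \<Rightarrow> 'v set \<Rightarrow> real" where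
  "delta_Q Q Out Inp = Min (delta_vo (fracture Q Inp) ` access_top_vos Q Out Inp)"

definition w_Q :: "('r,'v) cq_atom list \<Rightarrow> 'v set \<Rightarrow> 'v set \<Rightarrow> real" where
  "w_Q Q Out Inp = Min (w_vo (fracture Q Inp) `
       {anc \<in> access_top_vos Q Out Inp. delta_vo (fracture Q Inp) anc = delta_Q Q Out Inp})"

end

theory Submission
  imports Defs
begin

definition feas :: "('l \<Rightarrow> 'a set) \<Rightarrow> 'l set \<Rightarrow> 'a set \<Rightarrow> ('l \<Rightarrow> real) \<Rightarrow> bool" where
  "feas E L F lam \<longleftrightarrow> (\<forall>e\<in>L. 0 \<le> lam e \<and> lam e \<le> 1) \<and> (\<forall>Y\<in>F. (\<Sum>e\<in>{e\<in>L. Y \<in> E e}. lam e) \<ge> 1)"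

lemma rho_alt: "rho_star E L F = Inf ((\<lambda>lam. \<Sum>e\<in>L. lam e) ` Collect (feas E L F))"
  unfolding rho_star_def feas_def by (rule arg_cong[where f=Inf]) auto

lemma feas_one:
  assumes "finite L" "\<forall>A\<in>F. \<exists>e\<in>L. A \<in> E e"
  shows "feas E L F (\<lambda>_. 1)"
  unfolding feas_def
proof (intro conjI ballI)
  fix Y assume "Y \<in> F"
  then obtain e where "e \<in> L" "Y \<in> E e" using assms by blast
  then have "(\<Sum>e\<in>{e\<in>L. Y \<in> E e}. (1::real)) \<ge> (\<Sum>e\<in>{e}. 1)"
    by (intro sum_mono2) (use assms in auto)
  then show "(\<Sum>e\<in>{e\<in>L. Y \<in> E e}. (1::real)) \<ge> 1" by simp
qed auto

lemma bdd_feas: "bdd_below ((\<lambda>lam. \<Sum>e\<in>L. lam e) ` Collect (feas E L F))"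
  unfolding feas_def by (rule bdd_belowI[of _ 0]) (auto intro: sum_nonneg)

lemma rho_mono:
  assumes "finite L" "\<forall>A\<in>G. \<exists>e\<in>L. A \<in> E e" "F \<subseteq> G"
  shows "rho_star E L F \<le> rho_star E L G"
  unfolding rho_alt
proof (rule cInf_superset_mono)
  show "(\<lambda>lam. \<Sum>e\<in>L. lam e) ` Collect (feas E L G) \<noteq> {}" using feas_one[OF assms(1,2)] by blast
  show "bdd_below ((\<lambda>lam. \<Sum>e\<in>L. lam e) ` Collect (feas E L F))" by (rule bdd_feas)
  show "(\<lambda>lam. \<Sum>e\<in>L. lam e) ` Collect (feas E L G) \<subseteq> (\<lambda>lam. \<Sum>e\<in>L. lam e) ` Collect (feas E L F)"
    using assms(3) unfolding feas_def by blast
qed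

lemma rho_plus1:
  assumes "finite L" "\<forall>A\<in>F. \<exists>e\<in>L. A \<in> E e" "e0 \<in> L"
  shows "rho_star E L F \<le> rho_star E L (F - E e0) + 1"
proof -
  have ne: "(\<lambda>lam. \<Sum>e\<in>L. lam e) ` Collect (feas E L (F - E e0)) \<noteq> {}"
    using feas_one[OF assms(1), of "F - E e0" E] assms(2) by blast
  have "rho_star E L F - 1 \<le> Inf ((\<lambda>lam. \<Sum>e\<in>L. lam e) ` Collect (feas E L (F - E e0)))"
  proof (rule cInf_greatest[OF ne])
    fix x assume "x \<in> (\<lambda>lam. \<Sum>e\<in>L. lam e) ` Collect (feas E L (F - E e0))"
    then obtain lam where fl: "feas E L (F - E e0) lam" and x: "x = (\<Sum>e\<in>L. lam e)" by blast
    define lam' where "lam' = lam(e0 := 1)"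
    have b: "\<forall>e\<in>L. 0 \<le> lam e \<and> lam e \<le> 1" using fl unfolding feas_def by blast
    have ge: "\<forall>e\<in>L. lam e \<le> lam' e" using b unfolding lam'_def by auto
    have f': "feas E L F lam'"
      unfolding feas_def
    proof (intro conjI ballI)
      fix e assume "e \<in> L" then show "0 \<le> lam' e" "lam' e \<le> 1" using b unfolding lam'_def by auto
    next
      fix Y assume Y: "Y \<in> F"
      show "(\<Sum>e\<in>{e\<in>L. Y \<in> E e}. lam' e) \<ge> 1"
      proof (cases "Y \<in> E e0")
        case True
        have "lam' e0 \<le> (\<Sum>e\<in>{e\<in>L. Y \<in> E e}. lam' e)"
          by (rule member_le_sum) (use True assms b in \<open>auto simp: lam'_def\<close>)
        then show ?thesis by (simp add: lam'_def)
      next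
        case False
        then have "1 \<le> (\<Sum>e\<in>{e\<in>L. Y \<in> E e}. lam e)" using fl Y unfolding feas_def by blast
        also have "\<dots> \<le> (\<Sum>e\<in>{e\<in>L. Y \<in> E e}. lam' e)" by (rule sum_mono) (use ge in auto)
        finally show ?thesis .
      qed
    qed
    have "(\<Sum>e\<in>L. lam' e) \<le> (\<Sum>e\<in>L. lam e + (if e = e0 then 1 else 0))"
      by (rule sum_mono) (use b in \<open>auto simp: lam'_def\<close>)
    also have "\<dots> = x + 1" using assms(1,3) by (simp add: sum.distrib x)
    finally have "(\<Sum>e\<in>L. lam' e) \<le> x + 1" .
    moreover have "rho_star E L F \<le> (\<Sum>e\<in>L. lam' e)"
      unfolding rho_alt by (rule cInf_lower) (use f' bdd_feas in auto)
    ultimately show "rho_star E L F - 1 \<le> x" by linarith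
  qed
  then show ?thesis unfolding rho_alt by linarith
qed

lemma rho_int:
  assumes fL: "finite L" and fF: "finite F" and ne: "\<forall>A\<in>F. \<exists>e\<in>L. A \<in> E e"
    and lam: "\<forall>A\<in>F. \<forall>B\<in>F. {e\<in>L. A \<in> E e} \<subseteq> {e\<in>L. B \<in> E e} \<or> {e\<in>L. B \<in> E e} \<subseteq> {e\<in>L. A \<in> E e}
               \<or> {e\<in>L. A \<in> E e} \<inter> {e\<in>L. B \<in> E e} = {}"
  shows "rho_star E L F \<in> \<int>"
proof -
  define r where "r A = {e\<in>L. A \<in> E e}" for A
  define mins where "mins = {A\<in>F. \<forall>B\<in>F. r B \<subseteq> r A \<longrightarrow> r B = r A}"
  define M where "M = r ` mins"
  have lam': "\<forall>A\<in>F. \<forall>B\<in>F. r A \<subseteq> r B \<or> r B \<subseteq> r A \<or> r A \<inter> r B = {}" using lam unfolding r_def by blast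
  have rne: "\<forall>A\<in>F. r A \<noteq> {}" using ne unfolding r_def by auto
  have rL: "r A \<subseteq> L" for A unfolding r_def by auto
  have fM: "finite M" unfolding M_def by (rule finite_imageI, rule finite_subset[OF _ fF]) (auto simp: mins_def)
  have fm: "\<forall>m\<in>M. finite m"
  proof
    fix m assume "m \<in> M" then obtain B where "m = r B" by (auto simp: M_def)
    then show "finite m" using rL[of B] fL finite_subset by blast
  qed
  have mF: "mins \<subseteq> F" unfolding mins_def by auto
  have exmin: "\<exists>B\<in>mins. r B \<subseteq> r A" if A: "A \<in> F" for A
  proof -
    define S where "S = r ` {B\<in>F. r B \<subseteq> r A}"
    have fS: "finite S" unfolding S_def by (rule finite_imageI) (rule finite_subset[OF _ fF], blast)
    have aS: "r A \<in> S" unfolding S_def using A by blast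
    obtain m where m: "m \<in> S" "\<forall>b \<in> S. b \<subseteq> m \<longrightarrow> m = b"
      using finite_has_minimal2[OF fS aS] by blast
    obtain B where B: "B \<in> F" "r B \<subseteq> r A" "m = r B" using m(1) unfolding S_def by blast
    have "B \<in> mins" unfolding mins_def
    proof (intro CollectI conjI ballI impI)
      fix C assume "C \<in> F" "r C \<subseteq> r B"
      then have "r C \<in> S" unfolding S_def using B by blast
      then show "r C = r B" using m(2) B \<open>r C \<subseteq> r B\<close> by metis
    qed (fact B)
    then show ?thesis using B by blast
  qed
  have disj: "m1 \<inter> m2 = {}" if hm: "m1 \<in> M" "m2 \<in> M" "m1 \<noteq> m2" for m1 m2
  proof -
    obtain B1 where B1: "B1 \<in> mins" "m1 = r B1" using hm(1) unfolding M_def by blast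
    obtain B2 where B2: "B2 \<in> mins" "m2 = r B2" using hm(2) unfolding M_def by blast
    have F: "B1 \<in> F" "B2 \<in> F" using B1 B2 mF by auto
    have n1: "\<not> r B1 \<subseteq> r B2" using B2(1) F(1) B1(2) B2(2) hm(3) unfolding mins_def by blast
    have n2: "\<not> r B2 \<subseteq> r B1" using B1(1) F(2) B1(2) B2(2) hm(3) unfolding mins_def by blast
    show ?thesis using lam' F n1 n2 B1(2) B2(2) by blast
  qed
  define P where "P = (\<lambda>m. SOME e. e \<in> m) ` M"
  have some_in: "(SOME e. e \<in> m) \<in> m" if hm: "m \<in> M" for m
  proof -
    obtain B where "B \<in> mins" "m = r B" using hm unfolding M_def by auto
    then have "m \<noteq> {}" using rne mF by auto
    then show ?thesis by (simp add: some_in_eq)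
  qed
  have inj: "inj_on (\<lambda>m. SOME e. e \<in> m) M"
  proof (rule inj_onI)
    fix m1 m2 assume "m1 \<in> M" "m2 \<in> M" "(SOME e. e \<in> m1) = (SOME e. e \<in> m2)"
    then show "m1 = m2" using some_in[of m1] some_in[of m2] disj[of m1 m2] by auto
  qed
  have PL: "P \<subseteq> L"
  proof
    fix e assume "e \<in> P"
    then obtain m where "m \<in> M" "e = (SOME e. e \<in> m)" unfolding P_def by blast
    moreover obtain B where "m = r B" using \<open>m \<in> M\<close> unfolding M_def by blast
    ultimately show "e \<in> L" using some_in rL by blast
  qed
  define lam0 where "lam0 = (\<lambda>e. if e \<in> P then (1::real) else 0)"
  have sum0: "(\<Sum>e\<in>L. lam0 e) = real (card M)"
  proof -
    have "(\<Sum>e\<in>L. lam0 e) = (\<Sum>e\<in>L \<inter> P. 1)" unfolding lam0_def using sum.inter_restrict[OF fL, of "\<lambda>_. (1::real)" P] by simp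
    also have "L \<inter> P = P" using PL by auto
    also have "(\<Sum>e\<in>P. (1::real)) = real (card P)" by simp
    also have "card P = card M" unfolding P_def using card_image[OF inj] .
    finally show ?thesis .
  qed
  have feas0: "feas E L F lam0"
    unfolding feas_def
  proof (intro conjI ballI)
    fix Y assume Y: "Y \<in> F"
    then obtain B where B: "B \<in> mins" "r B \<subseteq> r Y" using exmin by blast
    let ?e = "SOME e. e \<in> r B"
    have "r B \<in> M" using B unfolding M_def by auto
    then have "?e \<in> r B" "?e \<in> P" using some_in unfolding P_def by auto
    then have "?e \<in> r Y" using B by auto
    then have "lam0 ?e \<le> (\<Sum>e\<in>{e\<in>L. Y \<in> E e}. lam0 e)"
      by (intro member_le_sum) (auto simp: lam0_def r_def intro: finite_subset[OF _ fL])
    then show "(\<Sum>e\<in>{e\<in>L. Y \<in> E e}. lam0 e) \<ge> 1" using \<open>?e \<in> P\<close> by (simp add: lam0_def)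
  qed (auto simp: lam0_def)
  have lower: "real (card M) \<le> (\<Sum>e\<in>L. lam e)" if fl: "feas E L F lam" for lam
  proof -
    have b: "\<forall>e\<in>L. 0 \<le> lam e" using fl unfolding feas_def by blast
    have "real (card M) = (\<Sum>m\<in>M. (1::real))" by simp
    also have "\<dots> \<le> (\<Sum>m\<in>M. \<Sum>e\<in>m. lam e)"
    proof (rule sum_mono)
      fix m assume "m \<in> M"
      then obtain B where "B \<in> mins" "m = r B" unfolding M_def by auto
      then show "1 \<le> (\<Sum>e\<in>m. lam e)" using fl mF unfolding feas_def r_def by auto
    qed
    also have "\<dots> = (\<Sum>e\<in>\<Union>M. lam e)"
      using sum.Union_disjoint[of M lam] fm disj by (simp add: comp_def)
    also have "\<dots> \<le> (\<Sum>e\<in>L. lam e)"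
      by (rule sum_mono2[OF fL]) (use b rL in \<open>auto simp: M_def\<close>)
    finally show ?thesis .
  qed
  have "rho_star E L F = real (card M)"
    unfolding rho_alt
  proof (rule cInf_eq_minimum)
    show "real (card M) \<in> (\<lambda>lam. \<Sum>e\<in>L. lam e) ` Collect (feas E L F)"
      using feas0 sum0 by (metis (no_types, lifting) image_eqI mem_Collect_eq)
  qed (use lower in auto)
  then show ?thesis by simp
qed

lemma finite_qvars: "finite (qvars Q)"
  unfolding qvars_def schema_def by auto

lemma vo_wf: assumes "is_vo Q anc" shows "wf (anc\<inverse>)"
proof (rule finite_acyclic_wf_converse)
  have "anc \<subseteq> qvars Q \<times> qvars Q" using assms unfolding is_vo_def by blast
  then show "finite anc" using finite_qvars by (meson finite_SigmaI finite_subset)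
  have t: "trans anc" and i: "\<forall>x. (x,x) \<notin> anc" using assms unfolding is_vo_def by blast+
  show "acyclic anc" unfolding acyclic_def using trancl_id[OF t] i by simp
qed

lemma ind_char:
  assumes "is_vo Q anc" "c \<in> indicators Q anc Y"
  shows "\<exists>i<length Q. c = (Y, i, schema Q i \<inter> dep_set Q anc Y)"
proof -
  have "indicators Q anc Y = ind_step Q anc (cut (indicators Q anc) (anc\<inverse>) Y) Y"
    unfolding indicators_def by (rule wfrec[OF vo_wf[OF assms(1)]])
  then show ?thesis using assms(2) unfolding ind_step_def Let_def by auto
qed

lemma ind_fin:
  assumes "is_vo Q anc" shows "finite (indicators Q anc Y)"
proof (rule finite_subset)
  show "indicators Q anc Y \<subseteq> (\<lambda>i. (Y, i, schema Q i \<inter> dep_set Q anc Y)) ` {..<length Q}"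
    using ind_char[OF assms] by blast
qed auto

lemma subtree_fin: "finite (subtree anc X)" if "is_vo Q anc"
proof -
  have "anc \<subseteq> qvars Q \<times> qvars Q" using that unfolding is_vo_def by blast
  then have "subtree anc X \<subseteq> insert X (qvars Q)" unfolding subtree_def by auto
  then show ?thesis using finite_qvars finite_subset by blast
qed

lemma QX_fin: assumes "is_vo Q anc" shows "finite (QX Q anc X)"
  unfolding QX_def below_def using ind_fin[OF assms] subtree_fin[OF assms] by auto

lemma QX_cases:
  assumes "is_vo Q anc" "e \<in> QX Q anc X"
  obtains j where "j \<in> below Q anc X" "e = Inl j" "leaf_schema Q e = schema Q j"
  | Y i where "Y \<in> subtree anc X" "i < length Q" "e = Inr (Y, i, schema Q i \<inter> dep_set Q anc Y)"
      "leaf_schema Q e = schema Q i \<inter> dep_set Q anc Y"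
proof -
  consider (l) j where "j \<in> below Q anc X" "e = Inl j" | (r) Y c where "Y \<in> subtree anc X" "c \<in> indicators Q anc Y" "e = Inr c"
    using assms(2) unfolding QX_def by blast
  then show ?thesis
  proof cases
    case l then show ?thesis using that(1) by (simp add: leaf_schema_def)
  next
    case r
    then obtain i where "i < length Q" "c = (Y, i, schema Q i \<inter> dep_set Q anc Y)" using ind_char[OF assms(1)] by blast
    then show ?thesis using that(2)[of Y i] r by (simp add: leaf_schema_def)
  qed
qed

lemma rows_ne:
  assumes "X \<in> qvars Q" "A \<in> dep_set Q anc X"
  shows "\<exists>e\<in>QX Q anc X. A \<in> leaf_schema Q e"
proof (cases "A = X")
  case True
  then obtain j where "j < length Q" "X \<in> schema Q j" using assms(1) unfolding qvars_def by auto
  then have "j \<in> below Q anc X" unfolding below_def subtree_def by blast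
  then have "Inl j \<in> QX Q anc X" unfolding QX_def by blast
  moreover have "X \<in> leaf_schema Q (Inl j)" using \<open>X \<in> schema Q j\<close> by (simp add: leaf_schema_def)
  ultimately show ?thesis using True by blast
next
  case False
  then have "A \<in> dep Q anc X" using assms(2) unfolding dep_set_def by auto
  then obtain j where "j < length Q" "A \<in> schema Q j" "schema Q j \<inter> subtree anc X \<noteq> {}"
    unfolding dep_def by auto
  then have "j \<in> below Q anc X" unfolding below_def by auto
  then have "Inl j \<in> QX Q anc X" unfolding QX_def by blast
  moreover have "A \<in> leaf_schema Q (Inl j)" using \<open>A \<in> schema Q j\<close> by (simp add: leaf_schema_def)
  ultimately show ?thesis by blast
qed

lemma dep_transfer:
  assumes vo: "is_vo Q anc" and A: "A \<in> dep_set Q anc X" and B: "B \<in> dep_set Q anc X"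
    and Y: "Y \<in> subtree anc X" and AY: "A \<in> dep_set Q anc Y"
    and sub: "atoms_of Q A \<subseteq> atoms_of Q B"
  shows "B \<in> dep_set Q anc Y"
proof (cases "Y = X")
  case True then show ?thesis using B by simp
next
  case False
  have t: "trans anc" and i: "\<forall>x. (x,x) \<notin> anc" using vo unfolding is_vo_def by blast+
  have XY: "(X,Y) \<in> anc" using Y False unfolding subtree_def by auto
  have BX: "B = X \<or> (B,X) \<in> anc" using B unfolding dep_set_def dep_def by auto
  have BY: "(B,Y) \<in> anc" using BX XY t by (auto dest: transD)
  have AX: "A = X \<or> (A,X) \<in> anc" using A unfolding dep_set_def dep_def by auto
  have "A \<noteq> Y"
  proof
    assume "A = Y"
    then show False using AX XY False i t by (metis transD)
  qed
  then have "A \<in> dep Q anc Y" using AY unfolding dep_set_def by auto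
  then obtain j where j: "j < length Q" "A \<in> schema Q j" "schema Q j \<inter> subtree anc Y \<noteq> {}"
    unfolding dep_def by auto
  then have "j \<in> atoms_of Q A" unfolding atoms_of_def by auto
  then have "B \<in> schema Q j" using sub unfolding atoms_of_def by auto
  then have "B \<in> dep Q anc Y" unfolding dep_def using BY j by auto
  then show ?thesis unfolding dep_set_def by auto
qed

lemma rows_lam:
  assumes vo: "is_vo Q anc" and h: "hierarchical Q"
    and A: "A \<in> dep_set Q anc X" and B: "B \<in> dep_set Q anc X"
  shows "{e\<in>QX Q anc X. A \<in> leaf_schema Q e} \<subseteq> {e\<in>QX Q anc X. B \<in> leaf_schema Q e}
       \<or> {e\<in>QX Q anc X. B \<in> leaf_schema Q e} \<subseteq> {e\<in>QX Q anc X. A \<in> leaf_schema Q e}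
       \<or> {e\<in>QX Q anc X. A \<in> leaf_schema Q e} \<inter> {e\<in>QX Q anc X. B \<in> leaf_schema Q e} = {}"
proof -
  have incl: "{e\<in>QX Q anc X. A' \<in> leaf_schema Q e} \<subseteq> {e\<in>QX Q anc X. B' \<in> leaf_schema Q e}"
    if A': "A' \<in> dep_set Q anc X" and B': "B' \<in> dep_set Q anc X" and s: "atoms_of Q A' \<subseteq> atoms_of Q B'"
    for A' B'
  proof (intro subsetI CollectI conjI)
    fix e assume "e \<in> {e\<in>QX Q anc X. A' \<in> leaf_schema Q e}"
    then have e: "e \<in> QX Q anc X" "A' \<in> leaf_schema Q e" by auto
    then show "e \<in> QX Q anc X" by simp
    from vo e(1) show "B' \<in> leaf_schema Q e"
    proof (cases rule: QX_cases)
      case (1 j)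
      then have "j \<in> atoms_of Q A'" using e(2) unfolding atoms_of_def below_def by auto
      then show ?thesis using s 1 unfolding atoms_of_def by auto
    next
      case (2 Y i)
      then have "i \<in> atoms_of Q A'" using e(2) unfolding atoms_of_def by auto
      then have "B' \<in> schema Q i" using s unfolding atoms_of_def by auto
      moreover have "B' \<in> dep_set Q anc Y"
        using dep_transfer[OF vo A' B' 2(1) _ s] 2 e(2) by auto
      ultimately show ?thesis using 2 by auto
    qed
  qed
  have disj: "{e\<in>QX Q anc X. A \<in> leaf_schema Q e} \<inter> {e\<in>QX Q anc X. B \<in> leaf_schema Q e} = {}"
    if d: "atoms_of Q A \<inter> atoms_of Q B = {}"
  proof (rule ccontr)
    assume "\<not> ?thesis"
    then obtain e where e: "e \<in> QX Q anc X" "A \<in> leaf_schema Q e" "B \<in> leaf_schema Q e" by auto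
    from vo e(1) show False
    proof (cases rule: QX_cases)
      case (1 j)
      then show False using e d unfolding atoms_of_def below_def by auto
    next
      case (2 Y i)
      then show False using e d unfolding atoms_of_def by auto
    qed
  qed
  show ?thesis using h incl[OF A B] incl[OF B A] disj unfolding hierarchical_def by blast
qed

lemma dep_set_fin: "is_vo Q anc \<Longrightarrow> X \<in> qvars Q \<Longrightarrow> finite (dep_set Q anc X)"
proof -
  assume vo: "is_vo Q anc" and X: "X \<in> qvars Q"
  have "anc \<subseteq> qvars Q \<times> qvars Q" using vo unfolding is_vo_def by blast
  then have "dep_set Q anc X \<subseteq> qvars Q" using X unfolding dep_set_def dep_def by auto
  then show ?thesis using finite_qvars finite_subset by blast
qed

lemma rho_int_vo:
  assumes vo: "is_vo Q anc" and h: "hierarchical Q" and X: "X \<in> qvars Q"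
    and F: "F \<subseteq> dep_set Q anc X"
  shows "rho_star (leaf_schema Q) (QX Q anc X) F \<in> \<int>"
proof (rule rho_int)
  show "finite (QX Q anc X)" by (rule QX_fin[OF vo])
  show "finite F" using dep_set_fin[OF vo X] F finite_subset by blast
  show "\<forall>A\<in>F. \<exists>e\<in>QX Q anc X. A \<in> leaf_schema Q e" using rows_ne[OF X] F by blast
  show "\<forall>A\<in>F. \<forall>B\<in>F. {e\<in>QX Q anc X. A \<in> leaf_schema Q e} \<subseteq> {e\<in>QX Q anc X. B \<in> leaf_schema Q e}
       \<or> {e\<in>QX Q anc X. B \<in> leaf_schema Q e} \<subseteq> {e\<in>QX Q anc X. A \<in> leaf_schema Q e}
       \<or> {e\<in>QX Q anc X. A \<in> leaf_schema Q e} \<inter> {e\<in>QX Q anc X. B \<in> leaf_schema Q e} = {}"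
    using rows_lam[OF vo h] F by blast
qed

lemma int_close:
  fixes a b :: real
  assumes "a \<in> \<int>" "b \<in> \<int>" "a \<le> b" "b \<le> a + 1"
  shows "a = b \<or> a = b - 1"
proof -
  obtain i where i: "a = of_int i" using assms(1) Ints_cases by blast
  obtain j where j: "b = of_int j" using assms(2) Ints_cases by blast
  have "i \<le> j" "j \<le> i + 1" using assms(3,4) unfolding i j by linarith+
  then have "j = i \<or> j = i + 1" by linarith
  then show ?thesis unfolding i j by auto
qed

lemma vo_main:
  assumes vo: "is_vo Q anc" and h: "hierarchical Q"
  shows "delta_vo Q anc = w_vo Q anc \<or> delta_vo Q anc = w_vo Q anc - 1"
proof (cases "qvars Q = {}")
  case True then show ?thesis unfolding delta_vo_def w_vo_def by simp
next
  case False
  define rho where "rho X F = rho_star (leaf_schema Q) (QX Q anc X) F" for X F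
  define inner where "inner X = Max ((\<lambda>e. rho X (dep_set Q anc X - leaf_schema Q e)) ` QX Q anc X)" for X
  have dv: "delta_vo Q anc = Max (inner ` qvars Q)" unfolding delta_vo_def inner_def rho_def by simp
  have wv: "w_vo Q anc = Max ((\<lambda>X. rho X (dep_set Q anc X)) ` qvars Q)" unfolding w_vo_def rho_def by simp
  have fin: "finite (QX Q anc X)" for X by (rule QX_fin[OF vo])
  have QXne: "QX Q anc X \<noteq> {}" if X: "X \<in> qvars Q" for X
    using rows_ne[OF X, of X anc] unfolding dep_set_def by blast
  have rne: "\<forall>A\<in>dep_set Q anc X. \<exists>e\<in>QX Q anc X. A \<in> leaf_schema Q e" if X: "X \<in> qvars Q" for X
    using rows_ne[OF X] by blast
  have inner_props: "inner X \<in> \<int> \<and> inner X \<le> rho X (dep_set Q anc X) \<and> rho X (dep_set Q anc X) \<le> inner X + 1"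
    if X: "X \<in> qvars Q" for X
  proof -
    have "inner X \<in> (\<lambda>e. rho X (dep_set Q anc X - leaf_schema Q e)) ` QX Q anc X"
      unfolding inner_def by (rule Max_in) (use fin QXne[OF X] in auto)
    then obtain e where e: "e \<in> QX Q anc X" "inner X = rho X (dep_set Q anc X - leaf_schema Q e)" by blast
    have i1: "inner X \<in> \<int>" unfolding e(2) rho_def by (rule rho_int_vo[OF vo h X]) auto
    have i2: "inner X \<le> rho X (dep_set Q anc X)" unfolding e(2) rho_def
      by (rule rho_mono[OF fin rne[OF X]]) auto
    have "rho X (dep_set Q anc X) \<le> rho X (dep_set Q anc X - leaf_schema Q e) + 1"
      unfolding rho_def by (rule rho_plus1[OF fin rne[OF X] e(1)])
    also have "\<dots> \<le> inner X + 1" unfolding inner_def using fin e(1) by (intro add_right_mono Max_ge) auto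
    finally show ?thesis using i1 i2 by blast
  qed
  have fV: "finite (qvars Q)" by (rule finite_qvars)
  have "delta_vo Q anc \<in> inner ` qvars Q" unfolding dv by (rule Max_in) (use fV False in auto)
  then obtain X0 where X0: "X0 \<in> qvars Q" "delta_vo Q anc = inner X0" by blast
  have "w_vo Q anc \<in> (\<lambda>X. rho X (dep_set Q anc X)) ` qvars Q" unfolding wv by (rule Max_in) (use fV False in auto)
  then obtain X1 where X1: "X1 \<in> qvars Q" "w_vo Q anc = rho X1 (dep_set Q anc X1)" by blast
  have a1: "delta_vo Q anc \<in> \<int>" using X0 inner_props by auto
  have a2: "w_vo Q anc \<in> \<int>" unfolding X1(2) rho_def by (rule rho_int_vo[OF vo h X1(1)]) auto
  have "delta_vo Q anc \<le> rho X0 (dep_set Q anc X0)" using X0 inner_props by auto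
  also have "\<dots> \<le> w_vo Q anc" unfolding wv using fV X0(1) by (intro Max_ge) auto
  finally have a3: "delta_vo Q anc \<le> w_vo Q anc" .
  have "w_vo Q anc \<le> inner X1 + 1" using X1 inner_props by auto
  also have "inner X1 \<le> delta_vo Q anc" unfolding dv using fV X1(1) by (intro Max_ge) auto
  finally have a4: "w_vo Q anc \<le> delta_vo Q anc + 1" by simp
  show ?thesis using int_close[OF a1 a2 a3 a4] .
qed

theorem proposition3p8:
  fixes Q :: "('r,'v) cq_atom list" and Out Inp :: "'v set"
  assumes "cqap Q Out Inp"
    and "hierarchical (fracture Q Inp)"
  shows "delta_Q Q Out Inp = w_Q Q Out Inp \<or> delta_Q Q Out Inp = w_Q Q Out Inp - 1"
proof -
  let ?Q = "fracture Q Inp"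
  let ?S = "access_top_vos Q Out Inp"
  have finS: "finite ?S"
  proof (rule finite_subset)
    show "?S \<subseteq> Pow (qvars ?Q \<times> qvars ?Q)" unfolding access_top_vos_def is_vo_def by auto
    show "finite (Pow (qvars ?Q \<times> qvars ?Q))" using finite_qvars by auto
  qed
  show ?thesis
  proof (cases "?S = {}")
    case True
    then show ?thesis unfolding delta_Q_def w_Q_def by simp
  next
    case False
    have "delta_Q Q Out Inp \<in> delta_vo ?Q ` ?S" unfolding delta_Q_def
      by (rule Min_in) (use finS False in auto)
    then obtain a0 where a0: "a0 \<in> ?S" "delta_vo ?Q a0 = delta_Q Q Out Inp" by auto
    let ?T = "{anc \<in> ?S. delta_vo ?Q anc = delta_Q Q Out Inp}"
    have "w_Q Q Out Inp \<in> w_vo ?Q ` ?T" unfolding w_Q_def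
      by (rule Min_in) (use finS a0 in auto)
    then obtain a1 where a1: "a1 \<in> ?S" "delta_vo ?Q a1 = delta_Q Q Out Inp" "w_vo ?Q a1 = w_Q Q Out Inp" by auto
    have "is_vo ?Q a1" using a1(1) unfolding access_top_vos_def by auto
    from vo_main[OF this assms(2)] show ?thesis using a1 by simp
  qed
qed

end
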